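(* Consider the balanced regret multi-representative selection problem \[\min_{\pmb x\in\mathcal X}\ \max_{\pmb\delta\in\Delta(\Gamma),\,\pmb y\in\mathcal X}\ \min_{\pmb\epsilon\in\Delta(\Gamma')}\ \sum_{i\in[n]}(\hat c_i+d_i\delta_i+d_i\epsilon_i)(x_i-y_i),\quad \mathcal X=\Big\{\pmb x\in\{0,1\}^n:\sum_{i\in T_\ell}x_i=p_\ell\ \forall\ell\in[L]\Big\}.\] If $\hat{\pmb c}$ or $\pmb d$ is a vector all of whose entries are equal, then an optimal solution can be found in polynomial time.
   Context: $[n]=\{1,\dots,n\}$; $T_1\cup\dots\cup T_L=[n]$ is a partition and $p_\ell\le|T_\ell|$ are integers; $\hat c_i\ge0$, $d_i\ge0$; $\Gamma,\Gamma'\ge0$ are integers and $\Delta(k)=\{\pmb\delta\in\{0,1\}^n:\sum_i\delta_i\le k\}$. *)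

theory Defs
  imports Complex_Main
begin

text \<open>Indices are 0-based: items are 0..n-1, parts are 0..L-1.
  The partition T_1,...,T_L of the item set is given by a label function t:
  item i belongs to part t i.\<close>

definition part :: "nat \<Rightarrow> (nat \<Rightarrow> nat) \<Rightarrow> nat \<Rightarrow> nat set" where
  "part n t l = {i. i < n \<and> t i = l}"

definition feasible :: "nat \<Rightarrow> nat \<Rightarrow> (nat \<Rightarrow> nat) \<Rightarrow> (nat \<Rightarrow> nat) \<Rightarrow> (nat \<Rightarrow> nat) set" where
  "feasible n L t p = {x. (\<forall>i. x i \<in> {0,1}) \<and> (\<forall>i\<ge>n. x i = 0) \<and>
       (\<forall>l<L. (\<Sum>i\<in>part n t l. x i) = p l)}"

definition Delta :: "nat \<Rightarrow> nat \<Rightarrow> (nat \<Rightarrow> nat) set" where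
  "Delta n k = {\<delta>. (\<forall>i. \<delta> i \<in> {0,1}) \<and> (\<forall>i\<ge>n. \<delta> i = 0) \<and> (\<Sum>i<n. \<delta> i) \<le> k}"

definition regret_val ::
  "nat \<Rightarrow> (nat \<Rightarrow> real) \<Rightarrow> (nat \<Rightarrow> real) \<Rightarrow> (nat \<Rightarrow> nat) \<Rightarrow> (nat \<Rightarrow> nat) \<Rightarrow> (nat \<Rightarrow> nat) \<Rightarrow> (nat \<Rightarrow> nat) \<Rightarrow> real" where
  "regret_val n c d \<delta> \<epsilon> x y =
     (\<Sum>i<n. (c i + d i * real (\<delta> i) + d i * real (\<epsilon> i)) * (real (x i) - real (y i)))"

definition objective ::
  "nat \<Rightarrow> nat \<Rightarrow> (nat \<Rightarrow> nat) \<Rightarrow> (nat \<Rightarrow> nat) \<Rightarrow> nat \<Rightarrow> nat \<Rightarrow> (nat \<Rightarrow> real) \<Rightarrow> (nat \<Rightarrow> real) \<Rightarrow> (nat \<Rightarrow> nat) \<Rightarrow> real" where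
  "objective n L t p G G' c d x =
     Max ((\<lambda>(\<delta>, y). Min ((\<lambda>\<epsilon>. regret_val n c d \<delta> \<epsilon> x y) ` Delta n G'))
            ` (Delta n G \<times> feasible n L t p))"

definition optimal ::
  "nat \<Rightarrow> nat \<Rightarrow> (nat \<Rightarrow> nat) \<Rightarrow> (nat \<Rightarrow> nat) \<Rightarrow> nat \<Rightarrow> nat \<Rightarrow> (nat \<Rightarrow> real) \<Rightarrow> (nat \<Rightarrow> real) \<Rightarrow> (nat \<Rightarrow> nat) \<Rightarrow> bool" where
  "optimal n L t p G G' c d x \<longleftrightarrow> x \<in> feasible n L t p \<and>
     (\<forall>x'\<in>feasible n L t p. objective n L t p G G' c d x \<le> objective n L t p G G' c d x')"

definition valid_instance ::
  "nat \<Rightarrow> nat \<Rightarrow> (nat \<Rightarrow> nat) \<Rightarrow> (nat \<Rightarrow> nat) \<Rightarrow> (nat \<Rightarrow> real) \<Rightarrow> (nat \<Rightarrow> real) \<Rightarrow> bool" where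
  "valid_instance n L t p c d \<longleftrightarrow>
     (\<forall>i<n. t i < L) \<and> (\<forall>l<L. part n t l \<noteq> {}) \<and>
     (\<forall>l<L. p l \<le> card (part n t l)) \<and>
     (\<forall>i<n. c i \<ge> 0 \<and> d i \<ge> 0)"

definition all_equal :: "nat \<Rightarrow> (nat \<Rightarrow> real) \<Rightarrow> bool" where
  "all_equal n v \<longleftrightarrow> (\<forall>i<n. \<forall>j<n. v i = v j)"

text \<open>No multiplication, division or floor, so that unit cost is a sound measure
  (polynomially related to Turing machines on integer data).\<close>

datatype instr =
    Const nat int
  | Add nat nat nat
  | Sub nat nat nat
  | Load nat nat
  | Store nat nat
  | JmpLe nat nat nat
  | Halt

type_synonym config = "nat \<times> (nat \<Rightarrow> real)"

definition halted :: "instr list \<Rightarrow> config \<Rightarrow> bool" where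
  "halted P cf \<longleftrightarrow> fst cf \<ge> length P \<or> P ! fst cf = Halt"

fun exec :: "instr \<Rightarrow> config \<Rightarrow> config option" where
  "exec (Const r v) (pc, m) = Some (Suc pc, m(r := real_of_int v))"
| "exec (Add r a b) (pc, m) = Some (Suc pc, m(r := m a + m b))"
| "exec (Sub r a b) (pc, m) = Some (Suc pc, m(r := m a - m b))"
| "exec (Load r a) (pc, m) =
     (if m a \<in> \<nat> then Some (Suc pc, m(r := m (nat \<lfloor>m a\<rfloor>))) else None)"
| "exec (Store a s) (pc, m) =
     (if m a \<in> \<nat> then Some (Suc pc, m(nat \<lfloor>m a\<rfloor> := m s)) else None)"
| "exec (JmpLe a b tg) (pc, m) = Some (if m a \<le> m b then tg else Suc pc, m)"
| "exec Halt (pc, m) = Some (pc, m)"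

fun run :: "instr list \<Rightarrow> nat \<Rightarrow> config \<Rightarrow> config option" where
  "run P 0 cf = Some cf"
| "run P (Suc k) cf =
     (if halted P cf then Some cf
      else (case exec (P ! fst cf) cf of None \<Rightarrow> None | Some cf' \<Rightarrow> run P k cf'))"

text \<open>Input encoding: reg 0 = n, 1 = L, 2 = Gamma, 3 = Gamma',
  4+i = c_i, 4+n+i = d_i, 4+2n+i = t_i (i<n), 4+3n+l = p_l (l<L), all others 0.
  Output convention: on halting, register 4+i holds x_i (i<n).\<close>
definition encode ::
  "nat \<Rightarrow> nat \<Rightarrow> (nat \<Rightarrow> nat) \<Rightarrow> (nat \<Rightarrow> nat) \<Rightarrow> nat \<Rightarrow> nat \<Rightarrow> (nat \<Rightarrow> real) \<Rightarrow> (nat \<Rightarrow> real) \<Rightarrow> nat \<Rightarrow> real" where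
  "encode n L t p G G' c d r =
     (if r = 0 then real n else if r = 1 then real L
      else if r = 2 then real G else if r = 3 then real G'
      else if 4 \<le> r \<and> r < 4 + n then c (r - 4)
      else if 4 + n \<le> r \<and> r < 4 + 2*n then d (r - (4 + n))
      else if 4 + 2*n \<le> r \<and> r < 4 + 3*n then real (t (r - (4 + 2*n)))
      else if 4 + 3*n \<le> r \<and> r < 4 + 3*n + L then real (p (r - (4 + 3*n)))
      else 0)"

end

theory Submission
  imports Defs
begin

definition cset :: "nat \<Rightarrow> (nat \<Rightarrow> nat) \<Rightarrow> (nat \<Rightarrow> real) \<Rightarrow> (nat \<Rightarrow> real) \<Rightarrow> nat \<Rightarrow> nat set" where
  "cset n t c d i = {j. j < n \<and> t j = t i \<and>
     (j < i \<and> c j + d j \<le> c i + d i \<or> i \<le> j \<and> \<not> (c i + d i \<le> c j + d j))}"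

definition rk :: "nat \<Rightarrow> (nat \<Rightarrow> nat) \<Rightarrow> (nat \<Rightarrow> real) \<Rightarrow> (nat \<Rightarrow> real) \<Rightarrow> nat \<Rightarrow> nat" where
  "rk n t c d i = card (cset n t c d i)"

definition xs :: "nat \<Rightarrow> (nat \<Rightarrow> nat) \<Rightarrow> (nat \<Rightarrow> nat) \<Rightarrow> (nat \<Rightarrow> real) \<Rightarrow> (nat \<Rightarrow> real) \<Rightarrow> nat \<Rightarrow> nat" where
  "xs n t p c d i = (if i < n \<and> rk n t c d i < p (t i) then 1 else 0)"

lemma cset_iff:
  "j \<in> cset n t c d i \<longleftrightarrow> j < n \<and> t j = t i \<and>
     (c j + d j < c i + d i \<or> c j + d j = c i + d i \<and> j < i)"
  unfolding cset_def by auto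

lemma cset_fin: "finite (cset n t c d i)"
  unfolding cset_def by auto

lemma cset_sub: "cset n t c d j \<subseteq> cset n t c d i" if "j \<in> cset n t c d i"
  using that by (auto simp: cset_iff)

lemma rk_less:
  assumes "j \<in> cset n t c d i" shows "rk n t c d j < rk n t c d i"
proof -
  have "j \<notin> cset n t c d j" by (simp add: cset_iff)
  then have "cset n t c d j \<subset> cset n t c d i" using cset_sub[OF assms] assms by blast
  then show ?thesis unfolding rk_def by (rule psubset_card_mono[OF cset_fin])
qed

lemma cset_total: "i < n \<Longrightarrow> j < n \<Longrightarrow> t i = t j \<Longrightarrow> i \<noteq> j \<Longrightarrow>
   j \<in> cset n t c d i \<or> i \<in> cset n t c d j"
  unfolding cset_iff by auto

lemma rk_inj: "inj_on (rk n t c d) (part n t l)"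
proof (rule inj_onI)
  fix i j assume i: "i \<in> part n t l" and j: "j \<in> part n t l" and e: "rk n t c d i = rk n t c d j"
  show "i = j"
  proof (rule ccontr)
    assume "i \<noteq> j"
    with i j have "j \<in> cset n t c d i \<or> i \<in> cset n t c d j"
      by (intro cset_total) (auto simp: part_def)
    with rk_less[of j n t c d i] rk_less[of i n t c d j] e show False by auto
  qed
qed

lemma part_fin: "finite (part n t l)" unfolding part_def by auto

lemma rk_range:
  assumes "i \<in> part n t l" shows "rk n t c d i < card (part n t l)"
proof -
  have "cset n t c d i \<subseteq> part n t l - {i}" using assms by (auto simp: cset_iff part_def)
  moreover have "card (part n t l - {i}) < card (part n t l)"
    by (rule card_Diff1_less[OF part_fin assms])
  ultimately show ?thesis unfolding rk_def
    by (meson card_mono finite_Diff part_fin le_less_trans)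
qed

lemma rk_image: "rk n t c d ` part n t l = {..<card (part n t l)}"
proof -
  have sub: "rk n t c d ` part n t l \<subseteq> {..<card (part n t l)}"
    using rk_range by (metis image_subsetI lessThan_iff)
  have "card (rk n t c d ` part n t l) = card (part n t l)" by (rule card_image[OF rk_inj])
  then show ?thesis by (intro card_subset_eq[OF _ sub]) simp_all
qed

lemma card_low:
  assumes "q \<le> card (part n t l)"
  shows "card {i \<in> part n t l. rk n t c d i < q} = q"
proof -
  have img: "rk n t c d ` {i \<in> part n t l. rk n t c d i < q} = {..<q}"
  proof
    show "rk n t c d ` {i \<in> part n t l. rk n t c d i < q} \<subseteq> {..<q}" by auto
    show "{..<q} \<subseteq> rk n t c d ` {i \<in> part n t l. rk n t c d i < q}"
    proof
      fix k assume k: "k \<in> {..<q}"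
      then have "k \<in> rk n t c d ` part n t l" using rk_image[of n t c d l] assms by auto
      then obtain i where "i \<in> part n t l" "k = rk n t c d i" by blast
      with k show "k \<in> rk n t c d ` {i \<in> part n t l. rk n t c d i < q}" by auto
    qed
  qed
  have inj: "inj_on (rk n t c d) {i \<in> part n t l. rk n t c d i < q}"
    by (rule inj_on_subset[OF rk_inj]) blast
  have "card {i \<in> part n t l. rk n t c d i < q} = card {..<q}" using card_image[OF inj] img by metis
  then show ?thesis by simp
qed

lemma xs_feasible:
  assumes "valid_instance n L t p c d"
  shows "xs n t p c d \<in> feasible n L t p"
proof -
  have "(\<Sum>i\<in>part n t l. xs n t p c d i) = p l" if l: "l < L" for l
  proof -
    have "(\<Sum>i\<in>part n t l. xs n t p c d i) = (\<Sum>i\<in>part n t l. if rk n t c d i < p l then 1 else 0)"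
      by (rule sum.cong) (auto simp: xs_def part_def)
    also have "\<dots> = card {i \<in> part n t l. rk n t c d i < p l}"
      by (simp add: sum.inter_filter[OF part_fin, symmetric])
    also have "\<dots> = p l" using assms l by (intro card_low) (auto simp: valid_instance_def)
    finally show ?thesis .
  qed
  moreover have "\<forall>i. xs n t p c d i \<in> {0,1}" by (simp add: xs_def)
  moreover have "\<forall>i\<ge>n. xs n t p c d i = 0" by (simp add: xs_def)
  ultimately show ?thesis unfolding feasible_def mem_Collect_eq by (intro conjI allI impI) auto
qed

lemma xs_greedy:
  assumes "xs n t p c d i = 1" "xs n t p c d j = 0" "j < n" "t j = t i"
  shows "c i + d i \<le> c j + d j"
proof (rule ccontr)
  assume "\<not> ?thesis"
  then have "j \<in> cset n t c d i" using assms by (auto simp: cset_iff)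
  then have "rk n t c d j < rk n t c d i" by (rule rk_less)
  moreover have "rk n t c d i < p (t i)" using assms(1) by (simp add: xs_def split: if_splits)
  moreover have "\<not> rk n t c d j < p (t j)" using assms(2,3) by (simp add: xs_def split: if_splits)
  ultimately show False using assms(4) by simp
qed

definition sw :: "nat \<Rightarrow> nat \<Rightarrow> nat \<Rightarrow> nat" where
  "sw i j k = (if k = i then j else if k = j then i else k)"

lemma sw_sw[simp]: "sw i j (sw i j k) = k" by (simp add: sw_def)

lemma sw_bij:
  assumes "\<And>k. k \<in> A \<Longrightarrow> sw i j k \<in> A"
  shows "bij_betw (sw i j) A A"
  by (rule bij_betw_byWitness[where f'="sw i j"]) (use assms in auto)

lemma sw_lt: "i < n \<Longrightarrow> j < n \<Longrightarrow> k < n \<Longrightarrow> sw i j k < n"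
  by (simp add: sw_def)

lemma sum_sw:
  assumes "\<And>k. k \<in> A \<Longrightarrow> sw i j k \<in> A"
  shows "(\<Sum>k\<in>A. g (sw i j k)) = sum g A"
  by (rule sum.reindex_bij_betw[OF sw_bij[OF assms]])

lemma fins: "finite {f::nat\<Rightarrow>nat. \<forall>x. (x \<in> {..<n} \<longrightarrow> f x \<in> {0,1}) \<and> (x \<notin> {..<n} \<longrightarrow> f x = 0)}"
  by (rule finite_set_of_finite_funs) simp_all

lemma delta_fin: "finite (Delta n k)"
proof (rule finite_subset[OF _ fins])
  show "Delta n k \<subseteq> {f::nat\<Rightarrow>nat. \<forall>x. (x \<in> {..<n} \<longrightarrow> f x \<in> {0,1}) \<and> (x \<notin> {..<n} \<longrightarrow> f x = 0)}"
  proof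
    fix f assume "f \<in> Delta n k"
    then have "\<forall>x. f x \<in> {0,1}" "\<forall>x\<ge>n. f x = 0" by (simp_all add: Delta_def)
    then show "f \<in> {f::nat\<Rightarrow>nat. \<forall>x. (x \<in> {..<n} \<longrightarrow> f x \<in> {0,1}) \<and> (x \<notin> {..<n} \<longrightarrow> f x = 0)}"
      by simp
  qed
qed

lemma feas_fin: "finite (feasible n L t p)"
proof (rule finite_subset[OF _ fins])
  show "feasible n L t p \<subseteq> {f::nat\<Rightarrow>nat. \<forall>x. (x \<in> {..<n} \<longrightarrow> f x \<in> {0,1}) \<and> (x \<notin> {..<n} \<longrightarrow> f x = 0)}"
  proof
    fix f assume "f \<in> feasible n L t p"
    then have "\<forall>x. f x \<in> {0,1}" "\<forall>x\<ge>n. f x = 0" by (simp_all add: feasible_def)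
    then show "f \<in> {f::nat\<Rightarrow>nat. \<forall>x. (x \<in> {..<n} \<longrightarrow> f x \<in> {0,1}) \<and> (x \<notin> {..<n} \<longrightarrow> f x = 0)}"
      by simp
  qed
qed

lemma delta_ne: "(\<lambda>_. 0) \<in> Delta n k" unfolding Delta_def by auto

lemma delta_sw:
  assumes "\<delta> \<in> Delta n k" "i < n" "j < n"
  shows "\<delta> \<circ> sw i j \<in> Delta n k"
proof -
  have "(\<Sum>x<n. \<delta> (sw i j x)) = (\<Sum>x<n. \<delta> x)"
    by (rule sum_sw) (use assms in \<open>auto simp: sw_lt\<close>)
  moreover have fx: "\<And>x. x \<ge> n \<Longrightarrow> sw i j x = x" using assms(2,3) by (simp add: sw_def)
  moreover have d: "\<forall>x. \<delta> x \<in> {0,1}" "\<forall>x\<ge>n. \<delta> x = 0" "(\<Sum>x<n. \<delta> x) \<le> k"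
    using assms(1) unfolding Delta_def by blast+
  ultimately show ?thesis unfolding Delta_def mem_Collect_eq comp_def
    by (intro conjI allI impI) simp_all
qed

lemma feas_sw:
  assumes "y \<in> feasible n L t p" "i < n" "j < n" "t i = t j"
  shows "y \<circ> sw i j \<in> feasible n L t p"
proof -
  have "(\<Sum>x\<in>part n t l. y (sw i j x)) = (\<Sum>x\<in>part n t l. y x)" for l
  proof (rule sum_sw)
    fix k assume k: "k \<in> part n t l"
    then have "k < n" "t k = l" by (simp_all add: part_def)
    have "sw i j k < n" using \<open>k < n\<close> assms(2,3) by (simp add: sw_def)
    moreover have "t (sw i j k) = t k" unfolding sw_def using assms(4) by auto
    ultimately show "sw i j k \<in> part n t l" using \<open>t k = l\<close> by (simp add: part_def)
  qed
  moreover have fx: "\<And>x. x \<ge> n \<Longrightarrow> sw i j x = x" using assms(2,3) by (simp add: sw_def)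
  moreover have d: "\<forall>x. y x \<in> {0,1}" "\<forall>x\<ge>n. y x = 0" "\<forall>l<L. (\<Sum>x\<in>part n t l. y x) = p l"
    using assms(1) by (simp_all add: feasible_def)
  ultimately show ?thesis unfolding feasible_def mem_Collect_eq comp_def
    by (intro conjI allI impI) simp_all
qed

lemma term_le:
  fixes ci cj di dj a b z :: real
  assumes "cj \<le> ci" "dj \<le> di" "0 \<le> a" "0 \<le> b"
  shows "cj + dj * a + dj * b \<le> ci + di * a + di * b"
proof -
  have "dj * a \<le> di * a" using assms by (intro mult_right_mono)
  moreover have "dj * b \<le> di * b" using assms by (intro mult_right_mono)
  ultimately show ?thesis using assms by linarith
qed

lemma R_swap:
  assumes "x i = 1" "x j = 0" "i < n" "j < n" "c j \<le> c i" "d j \<le> d i" "\<forall>k. y k \<in> {0,1}"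
  shows "regret_val n c d \<delta> (\<epsilon> \<circ> sw i j) (x \<circ> sw i j) y
       \<le> regret_val n c d (\<delta> \<circ> sw i j) \<epsilon> x (y \<circ> sw i j)"
proof -
  let ?s = "sw i j"
  have "regret_val n c d (\<delta> \<circ> ?s) \<epsilon> x (y \<circ> ?s) =
     (\<Sum>k<n. (c k + d k * real (\<delta> (?s k)) + d k * real (\<epsilon> k)) * (real (x k) - real (y (?s k))))"
    by (simp add: regret_val_def)
  also have "\<dots> = (\<Sum>k<n. (c (?s k) + d (?s k) * real (\<delta> (?s (?s k))) + d (?s k) * real (\<epsilon> (?s k)))
        * (real (x (?s k)) - real (y (?s (?s k)))))"
    by (rule sum_sw[symmetric]) (use assms in \<open>auto simp: sw_lt\<close>)
  also have "\<dots> = (\<Sum>k<n. (c (?s k) + d (?s k) * real (\<delta> k) + d (?s k) * real (\<epsilon> (?s k)))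
        * (real (x (?s k)) - real (y k)))"
    by simp
  finally have R: "regret_val n c d (\<delta> \<circ> ?s) \<epsilon> x (y \<circ> ?s) = \<dots>" .
  have L: "regret_val n c d \<delta> (\<epsilon> \<circ> ?s) (x \<circ> ?s) y =
     (\<Sum>k<n. (c k + d k * real (\<delta> k) + d k * real (\<epsilon> (?s k))) * (real (x (?s k)) - real (y k)))"
    by (simp add: regret_val_def)
  show ?thesis unfolding L R
  proof (rule sum_mono)
    fix k assume "k \<in> {..<n}"
    show "(c k + d k * real (\<delta> k) + d k * real (\<epsilon> (?s k))) * (real (x (?s k)) - real (y k))
      \<le> (c (?s k) + d (?s k) * real (\<delta> k) + d (?s k) * real (\<epsilon> (?s k))) * (real (x (?s k)) - real (y k))"
    proof (cases "k = i")
      case True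
      then have "?s k = j" by (simp add: sw_def)
      moreover have "real (x j) - real (y k) \<le> 0" using assms by simp
      moreover have "c j + d j * real (\<delta> k) + d j * real (\<epsilon> j) \<le> c k + d k * real (\<delta> k) + d k * real (\<epsilon> j)"
        using True assms by (intro term_le) auto
      ultimately show ?thesis by (simp add: mult_right_mono_neg)
    next
      case False
      show ?thesis
      proof (cases "k = j")
        case True
        then have "?s k = i" using False by (simp add: sw_def)
        moreover have "0 \<le> real (x i) - real (y k)" using assms(7)[rule_format, of k] assms(1) by auto
        moreover have "c k + d k * real (\<delta> k) + d k * real (\<epsilon> i) \<le> c i + d i * real (\<delta> k) + d i * real (\<epsilon> i)"
          using True assms by (intro term_le) auto
        ultimately show ?thesis by (simp add: mult_right_mono)
      next
        case F2: False
        then have "?s k = k" using False by (simp add: sw_def)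
        then show ?thesis by simp
      qed
    qed
  qed
qed

definition Fv where
  "Fv n c d G' x \<delta> y = Min ((\<lambda>\<epsilon>. regret_val n c d \<delta> \<epsilon> x y) ` Delta n G')"

lemma objective_alt:
  "objective n L t p G G' c d x = Max ((\<lambda>(\<delta>,y). Fv n c d G' x \<delta> y) ` (Delta n G \<times> feasible n L t p))"
  by (simp add: objective_def Fv_def)

lemma Fv_swap:
  assumes "x \<in> feasible n L t p" "x i = 1" "x j = 0" "i < n" "j < n" "t i = t j"
    "c j \<le> c i" "d j \<le> d i" and dy: "\<delta> \<in> Delta n G" "y \<in> feasible n L t p"
  shows "Fv n c d G' (x \<circ> sw i j) \<delta> y \<le> Fv n c d G' x (\<delta> \<circ> sw i j) (y \<circ> sw i j)"
proof -
  let ?s = "sw i j"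
  have yv: "\<forall>k. y k \<in> {0,1}" using dy unfolding feasible_def by blast
  have mn: "Fv n c d G' (x \<circ> ?s) \<delta> y \<le> regret_val n c d (\<delta> \<circ> ?s) \<epsilon> x (y \<circ> ?s)"
    if e: "\<epsilon> \<in> Delta n G'" for \<epsilon>
  proof -
    have "\<epsilon> \<circ> ?s \<in> Delta n G'" using delta_sw[OF e assms(4,5)] .
    then have "Fv n c d G' (x \<circ> ?s) \<delta> y \<le> regret_val n c d \<delta> (\<epsilon> \<circ> ?s) (x \<circ> ?s) y"
      unfolding Fv_def by (intro Min_le finite_imageI delta_fin imageI)
    also have "\<dots> \<le> regret_val n c d (\<delta> \<circ> ?s) \<epsilon> x (y \<circ> ?s)"
      by (rule R_swap[OF assms(2,3,4,5,7,8) yv])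
    finally show ?thesis .
  qed
  show ?thesis unfolding Fv_def[of n c d G' x]
  proof (rule Min.boundedI)
    show "finite ((\<lambda>\<epsilon>. regret_val n c d (\<delta> \<circ> ?s) \<epsilon> x (y \<circ> ?s)) ` Delta n G')"
      by (intro finite_imageI delta_fin)
    show "(\<lambda>\<epsilon>. regret_val n c d (\<delta> \<circ> ?s) \<epsilon> x (y \<circ> ?s)) ` Delta n G' \<noteq> {}"
      using delta_ne[of n G'] by blast
    fix a assume "a \<in> (\<lambda>\<epsilon>. regret_val n c d (\<delta> \<circ> ?s) \<epsilon> x (y \<circ> ?s)) ` Delta n G'"
    then obtain \<epsilon> where "\<epsilon> \<in> Delta n G'" "a = regret_val n c d (\<delta> \<circ> ?s) \<epsilon> x (y \<circ> ?s)"
      by (rule imageE)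
    with mn show "Fv n c d G' (x \<circ> ?s) \<delta> y \<le> a" by simp
  qed
qed

lemma obj_swap:
  assumes x: "x \<in> feasible n L t p" and "x i = 1" "x j = 0" "i < n" "j < n" "t i = t j"
    "c j \<le> c i" "d j \<le> d i"
  shows "objective n L t p G G' c d (x \<circ> sw i j) \<le> objective n L t p G G' c d x"
proof -
  let ?s = "sw i j"
  let ?X = "feasible n L t p"
  let ?A = "Delta n G \<times> ?X"
  let ?F = "\<lambda>x. (\<lambda>(\<delta>,y). Fv n c d G' x \<delta> y)"
  have fin: "finite (?F x ` ?A)" "finite (?F (x \<circ> ?s) ` ?A)"
    by (intro finite_imageI finite_cartesian_product delta_fin feas_fin)+
  have "((\<lambda>_. 0), x) \<in> ?A" using delta_ne x by blast
  then have ne: "?F (x \<circ> ?s) ` ?A \<noteq> {}" by (metis empty_iff imageI)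
  show ?thesis unfolding objective_alt
  proof (rule Max.boundedI[OF fin(2) ne])
    fix v assume "v \<in> ?F (x \<circ> ?s) ` ?A"
    then obtain pr where pr: "pr \<in> ?A" "v = ?F (x \<circ> ?s) pr" by (rule imageE)
    obtain \<delta> y where pe: "pr = (\<delta>, y)" by (cases pr)
    have dy: "\<delta> \<in> Delta n G" "y \<in> ?X" using pr(1) pe by auto
    have v: "v = Fv n c d G' (x \<circ> ?s) \<delta> y" using pr(2) pe by simp
    have "(\<delta> \<circ> ?s, y \<circ> ?s) \<in> ?A"
      using delta_sw[OF dy(1) assms(4,5)] feas_sw[OF dy(2) assms(4,5,6)] by blast
    then have "?F x (\<delta> \<circ> ?s, y \<circ> ?s) \<le> Max (?F x ` ?A)"
      by (intro Max_ge[OF fin(1)] imageI)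
    then have "Fv n c d G' x (\<delta> \<circ> ?s) (y \<circ> ?s) \<le> Max (?F x ` ?A)" by simp
    with Fv_swap[OF assms dy] show "v \<le> Max (?F x ` ?A)" unfolding v by (rule order_trans)
  qed
qed

lemma feas_vals:
  assumes "x \<in> feasible n L t p"
  shows "x k = 0 \<or> x k = 1" "k \<ge> n \<Longrightarrow> x k = 0" "l < L \<Longrightarrow> (\<Sum>i\<in>part n t l. x i) = p l"
  using assms by (auto simp: feasible_def)

lemma exch1:
  assumes v: "valid_instance n L t p c d" and x: "x \<in> feasible n L t p" and z: "z \<in> feasible n L t p"
    and k: "k < n" "x k = 1" "z k = 0"
  shows "\<exists>j<n. t j = t k \<and> x j = 0 \<and> z j = 1"
proof (rule ccontr)
  assume neg: "\<not> ?thesis"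
  define l where "l = t k"
  have l: "l < L" using v k unfolding valid_instance_def l_def by blast
  have le: "\<forall>j\<in>part n t l. z j \<le> x j"
  proof
    fix j assume j: "j \<in> part n t l"
    then have "j < n" "t j = t k" by (simp_all add: part_def l_def)
    then have "\<not> (x j = 0 \<and> z j = 1)" using neg by blast
    moreover have "x j = 0 \<or> x j = 1" "z j = 0 \<or> z j = 1" using feas_vals x z by blast+
    ultimately show "z j \<le> x j" by auto
  qed
  have "k \<in> part n t l" using k by (simp add: part_def l_def)
  moreover have "z k < x k" using k by simp
  ultimately have "sum z (part n t l) < sum x (part n t l)"
    using le by (intro sum_strict_mono_ex1[OF part_fin]) auto
  moreover have "sum z (part n t l) = p l" "sum x (part n t l) = p l"
    using feas_vals(3)[OF z l] feas_vals(3)[OF x l] by simp_all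
  ultimately show False by simp
qed

lemma opt_main:
  assumes v: "valid_instance n L t p c d" and eq: "all_equal n c \<or> all_equal n d"
  shows "x \<in> feasible n L t p \<Longrightarrow>
    objective n L t p G G' c d (xs n t p c d) \<le> objective n L t p G G' c d x"
proof (induction "card {k. k < n \<and> x k \<noteq> xs n t p c d k}" arbitrary: x rule: less_induct)
  case less
  let ?z = "xs n t p c d"
  have z: "?z \<in> feasible n L t p" by (rule xs_feasible[OF v])
  show ?case
  proof (cases "x = ?z")
    case True then show ?thesis by simp
  next
    case False
    then obtain k where kx: "x k \<noteq> ?z k" by auto
    have kn: "k < n"
    proof (rule ccontr)
      assume "\<not> k < n"
      then have "x k = 0" "?z k = 0" using feas_vals(2)[OF less.prems] feas_vals(2)[OF z] by auto
      with kx show False by simp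
    qed
    have "\<exists>i j. i < n \<and> j < n \<and> t i = t j \<and> x i = 1 \<and> ?z i = 0 \<and> x j = 0 \<and> ?z j = 1"
    proof (cases "x k = 1")
      case True
      then have "?z k = 0" using kx feas_vals(1)[OF z, of k] by auto
      from exch1[OF v less.prems z kn True this] obtain j where "j < n" "t j = t k" "x j = 0" "?z j = 1"
        by blast
      then show ?thesis using kn True \<open>?z k = 0\<close> by metis
    next
      case False
      then have xk: "x k = 0" using feas_vals(1)[OF less.prems, of k] by auto
      then have zk: "?z k = 1" using kx feas_vals(1)[OF z, of k] by auto
      from exch1[OF v z less.prems kn zk xk] obtain i where "i < n" "t i = t k" "?z i = 0" "x i = 1"
        by blast
      then show ?thesis using kn xk zk by metis
    qed
    then obtain i j where ij: "i < n" "j < n" "t i = t j" "x i = 1" "?z i = 0" "x j = 0" "?z j = 1"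
      by blast
    have w: "c j + d j \<le> c i + d i"
      using xs_greedy[of n t p c d j i] ij by simp
    have cd: "c j \<le> c i \<and> d j \<le> d i"
    proof (cases "all_equal n c")
      case True
      then have "c j = c i" using ij unfolding all_equal_def by blast
      then show ?thesis using w by simp
    next
      case False
      then have "all_equal n d" using eq by simp
      then have "d j = d i" using ij unfolding all_equal_def by blast
      then show ?thesis using w by simp
    qed
    define x' where "x' = x \<circ> sw i j"
    have x'f: "x' \<in> feasible n L t p" unfolding x'_def by (rule feas_sw[OF less.prems ij(1-3)])
    have ox: "objective n L t p G G' c d x' \<le> objective n L t p G G' c d x"
      unfolding x'_def using cd by (intro obj_swap[OF less.prems ij(4,6,1,2,3)]) auto
    have ineq: "i \<noteq> j" using ij by auto
    have sub: "{k. k < n \<and> x' k \<noteq> ?z k} \<subset> {k. k < n \<and> x k \<noteq> ?z k}"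
    proof
      show "{k. k < n \<and> x' k \<noteq> ?z k} \<subseteq> {k. k < n \<and> x k \<noteq> ?z k}"
      proof
        fix k assume "k \<in> {k. k < n \<and> x' k \<noteq> ?z k}"
        then have k: "k < n" "x' k \<noteq> ?z k" by auto
        have "k \<noteq> i" using k ij unfolding x'_def by (auto simp: sw_def)
        moreover have "k \<noteq> j" using k ij ineq unfolding x'_def by (auto simp: sw_def)
        ultimately have "x' k = x k" unfolding x'_def by (simp add: sw_def)
        then show "k \<in> {k. k < n \<and> x k \<noteq> ?z k}" using k by simp
      qed
      have "i \<notin> {k. k < n \<and> x' k \<noteq> ?z k}" using ij unfolding x'_def by (simp add: sw_def)
      moreover have "i \<in> {k. k < n \<and> x k \<noteq> ?z k}" using ij by simp
      ultimately show "{k. k < n \<and> x' k \<noteq> ?z k} \<noteq> {k. k < n \<and> x k \<noteq> ?z k}" by blast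
    qed
    then have "card {k. k < n \<and> x' k \<noteq> ?z k} < card {k. k < n \<and> x k \<noteq> ?z k}"
      by (intro psubset_card_mono) auto
    then have "objective n L t p G G' c d ?z \<le> objective n L t p G G' c d x'"
      using less.hyps x'f by blast
    with ox show ?thesis by linarith
  qed
qed

lemma xs_optimal:
  assumes v: "valid_instance n L t p c d" and eq: "all_equal n c \<or> all_equal n d"
  shows "optimal n L t p G G' c d (xs n t p c d)"
  unfolding optimal_def using xs_feasible[OF v] opt_main[OF v eq] by blast

definition reach :: "instr list \<Rightarrow> config \<Rightarrow> nat \<Rightarrow> config \<Rightarrow> bool" where
  "reach P cf s cf' \<longleftrightarrow> (\<forall>k. run P (s + k) cf = run P k cf')"

lemma halted_run: "halted P cf \<Longrightarrow> run P k cf = Some cf"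
  by (induction k) auto

lemma reach_0: "reach P cf 0 cf" by (simp add: reach_def)

lemma reach_trans: "reach P cf a cf' \<Longrightarrow> reach P cf' b cf'' \<Longrightarrow> reach P cf (a + b) cf''"
  unfolding reach_def by (metis add.assoc)

lemma reach_Suc:
  assumes "\<not> halted P (pc, m)" "exec (P ! pc) (pc, m) \<noteq> None"
  shows "reach P (pc, m) (Suc s) cf' = reach P (the (exec (P ! pc) (pc, m))) s cf'"
  using assms unfolding reach_def by (auto split: option.splits)

lemma reach_final:
  assumes "reach P cf s cf'" "halted P cf'" "s \<le> N"
  shows "run P N cf = Some cf'"
proof -
  have "run P (s + (N - s)) cf = run P (N - s) cf'" using assms(1) unfolding reach_def by blast
  then show ?thesis using assms(2,3) halted_run by simp
qed

lemma real_add_numeral: "real a + numeral k = real (a + numeral k)" by simp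
lemma real_add_one: "real a + 1 = real (Suc a)" by simp
lemma real_Nats: "real a \<in> \<nat>" by simp
lemma real_Suc_minus1: "real (Suc a) - 1 = real a" by simp
lemma nat_floor_real: "nat \<lfloor>real a\<rfloor> = a" by simp

lemmas of_nat_add_rev = of_nat_add[symmetric]

definition prog :: "instr list" where
  "prog = [Add 2 0 0,
   Add 2 2 0,
   Add 1 1 2,
   Const 2 4,
   Add 1 1 2,
   Const 2 16,
   Add 2 1 2,
   Const 3 1,
   Store 2 4,
   Add 2 2 3,
   Store 2 5,
   Add 2 2 3,
   Const 4 6,
   JmpLe 1 4 19,
   Load 5 4,
   Store 2 5,
   Add 4 4 3,
   Add 2 2 3,
   JmpLe 3 3 13,
   Const 2 16,
   Add 15 1 2,
   Sub 2 2 2,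
   Add 13 1 1,
   Const 11 12,
   Add 13 13 11,
   Add 5 15 0,
   Add 6 0 0,
   Add 14 15 6,
   Add 14 14 0,
   Add 4 15 2,
   JmpLe 5 4 66,
   Load 7 4,
   Add 11 4 0,
   Load 11 11,
   Add 7 7 11,
   Add 8 4 6,
   Load 8 8,
   Sub 10 10 10,
   Add 9 15 2,
   JmpLe 5 9 57,
   Add 11 9 6,
   Load 11 11,
   JmpLe 11 8 44,
   JmpLe 3 3 55,
   JmpLe 8 11 46,
   JmpLe 3 3 55,
   Load 11 9,
   Add 12 9 0,
   Load 12 12,
   Add 11 11 12,
   JmpLe 4 9 53,
   JmpLe 11 7 54,
   JmpLe 3 3 55,
   JmpLe 7 11 55,
   Add 10 10 3,
   Add 9 9 3,
   JmpLe 3 3 39,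
   Add 11 8 14,
   Load 11 11,
   JmpLe 11 10 62,
   Store 13 3,
   JmpLe 3 3 63,
   Store 13 2,
   Add 4 4 3,
   Add 13 13 3,
   JmpLe 3 3 30,
   JmpLe 0 2 80,
   Const 1 3,
   Add 1 0 1,
   Sub 0 13 3,
   Const 4 4,
   JmpLe 1 4 77,
   Load 2 0,
   Store 1 2,
   Sub 0 0 3,
   Sub 1 1 3,
   JmpLe 3 3 71,
   Load 2 0,
   Sub 3 3 3,
   Add 4 2 3,
   Halt]"

lemma prog_len[simp]: "length prog = 81" by (simp add: prog_def)

lemma prog_nth[simp]:
  "prog ! 0 = Add 2 0 0"
  "prog ! 1 = Add 2 2 0"
  "prog ! 2 = Add 1 1 2"
  "prog ! 3 = Const 2 4"
  "prog ! 4 = Add 1 1 2"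
  "prog ! 5 = Const 2 16"
  "prog ! 6 = Add 2 1 2"
  "prog ! 7 = Const 3 1"
  "prog ! 8 = Store 2 4"
  "prog ! 9 = Add 2 2 3"
  "prog ! 10 = Store 2 5"
  "prog ! 11 = Add 2 2 3"
  "prog ! 12 = Const 4 6"
  "prog ! 13 = JmpLe 1 4 19"
  "prog ! 14 = Load 5 4"
  "prog ! 15 = Store 2 5"
  "prog ! 16 = Add 4 4 3"
  "prog ! 17 = Add 2 2 3"
  "prog ! 18 = JmpLe 3 3 13"
  "prog ! 19 = Const 2 16"
  "prog ! 20 = Add 15 1 2"
  "prog ! 21 = Sub 2 2 2"
  "prog ! 22 = Add 13 1 1"
  "prog ! 23 = Const 11 12"
  "prog ! 24 = Add 13 13 11"
  "prog ! 25 = Add 5 15 0"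
  "prog ! 26 = Add 6 0 0"
  "prog ! 27 = Add 14 15 6"
  "prog ! 28 = Add 14 14 0"
  "prog ! 29 = Add 4 15 2"
  "prog ! 30 = JmpLe 5 4 66"
  "prog ! 31 = Load 7 4"
  "prog ! 32 = Add 11 4 0"
  "prog ! 33 = Load 11 11"
  "prog ! 34 = Add 7 7 11"
  "prog ! 35 = Add 8 4 6"
  "prog ! 36 = Load 8 8"
  "prog ! 37 = Sub 10 10 10"
  "prog ! 38 = Add 9 15 2"
  "prog ! 39 = JmpLe 5 9 57"
  "prog ! 40 = Add 11 9 6"
  "prog ! 41 = Load 11 11"
  "prog ! 42 = JmpLe 11 8 44"
  "prog ! 43 = JmpLe 3 3 55"
  "prog ! 44 = JmpLe 8 11 46"
  "prog ! 45 = JmpLe 3 3 55"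
  "prog ! 46 = Load 11 9"
  "prog ! 47 = Add 12 9 0"
  "prog ! 48 = Load 12 12"
  "prog ! 49 = Add 11 11 12"
  "prog ! 50 = JmpLe 4 9 53"
  "prog ! 51 = JmpLe 11 7 54"
  "prog ! 52 = JmpLe 3 3 55"
  "prog ! 53 = JmpLe 7 11 55"
  "prog ! 54 = Add 10 10 3"
  "prog ! 55 = Add 9 9 3"
  "prog ! 56 = JmpLe 3 3 39"
  "prog ! 57 = Add 11 8 14"
  "prog ! 58 = Load 11 11"
  "prog ! 59 = JmpLe 11 10 62"
  "prog ! 60 = Store 13 3"
  "prog ! 61 = JmpLe 3 3 63"
  "prog ! 62 = Store 13 2"
  "prog ! 63 = Add 4 4 3"
  "prog ! 64 = Add 13 13 3"
  "prog ! 65 = JmpLe 3 3 30"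
  "prog ! 66 = JmpLe 0 2 80"
  "prog ! 67 = Const 1 3"
  "prog ! 68 = Add 1 0 1"
  "prog ! 69 = Sub 0 13 3"
  "prog ! 70 = Const 4 4"
  "prog ! 71 = JmpLe 1 4 77"
  "prog ! 72 = Load 2 0"
  "prog ! 73 = Store 1 2"
  "prog ! 74 = Sub 0 0 3"
  "prog ! 75 = Sub 1 1 3"
  "prog ! 76 = JmpLe 3 3 71"
  "prog ! 77 = Load 2 0"
  "prog ! 78 = Sub 3 3 3"
  "prog ! 79 = Add 4 2 3"
  "prog ! 80 = Halt"
  by (simp_all add: prog_def)

lemma halted_iff: "halted prog (pc, m) \<longleftrightarrow> 81 \<le> pc \<or> prog ! pc = Halt"
  by (simp add: halted_def)

lemmas ex_simps = reach_Suc halted_iff exec.simps real_add_numeral real_add_one of_nat_add_rev real_Suc_minus1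

locale inst =
  fixes n L :: nat and t p :: "nat \<Rightarrow> nat" and G G' :: nat and c d :: "nat \<Rightarrow> real"
  assumes valid: "valid_instance n L t p c d"
begin

definition "E = L + (n + n + n) + 4"
definition "B = E + 16"
definition "R = E + E + 12"

lemma B_ge: "16 \<le> B" by (simp add: B_def)
lemma R_ge: "16 \<le> R" by (simp add: R_def E_def)

lemma neqs:
  "r < 16 \<Longrightarrow> (B = r) = False"
  "r < 16 \<Longrightarrow> (B + x = r) = False"
  "r < 16 \<Longrightarrow> (B + x + y = r) = False"
  "r < 16 \<Longrightarrow> (x + (B + y + z) = r) = False"
  "r < 16 \<Longrightarrow> (R = r) = False"
  "r < 16 \<Longrightarrow> (R + x = r) = False"
  "r < 16 \<Longrightarrow> (r = B) = False"
  "r < 16 \<Longrightarrow> (r = B + x) = False"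
  "r < 16 \<Longrightarrow> (r = B + x + y) = False"
  "r < 16 \<Longrightarrow> (r = x + (B + y + z)) = False"
  "r < 16 \<Longrightarrow> (r = R) = False"
  "r < 16 \<Longrightarrow> (r = R + x) = False"
  "r < 16 \<Longrightarrow> (r = Suc B) = False"
  "r < 16 \<Longrightarrow> (Suc B = r) = False"
  using B_ge R_ge by auto

definition data :: "(nat \<Rightarrow> real) \<Rightarrow> bool" where
  "data m \<longleftrightarrow> (\<forall>b<n. m (B + b) = c b) \<and> (\<forall>b<n. m (B + b + n) = d b) \<and>
     (\<forall>b<n. m (B + b + (n + n)) = real (t b)) \<and> (\<forall>l<L. m (l + (B + (n + n) + n)) = real (p l))"

definition outs :: "nat \<Rightarrow> (nat \<Rightarrow> real) \<Rightarrow> bool" where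
  "outs i m \<longleftrightarrow> (\<forall>i'<i. m (R + i') = real (xs n t p c d i'))"

definition P2 :: "nat \<Rightarrow> (nat \<Rightarrow> real) \<Rightarrow> bool" where
  "P2 i m \<longleftrightarrow> m 0 = real n \<and> m 2 = 0 \<and> m 3 = 1 \<and> m 4 = real (B + i) \<and> m 5 = real (B + n) \<and>
     m 6 = real (n + n) \<and> m 13 = real (R + i) \<and> m 14 = real (B + (n + n) + n) \<and> m 15 = real B \<and>
     data m \<and> outs i m"

definition cnt :: "nat \<Rightarrow> nat \<Rightarrow> nat" where
  "cnt i j = card {j' \<in> cset n t c d i. j' < j}"

lemma cnt_Suc: "cnt i (Suc j) = cnt i j + (if j \<in> cset n t c d i then 1 else 0)"
proof -
  have "{j' \<in> cset n t c d i. j' < Suc j} = {j' \<in> cset n t c d i. j' < j} \<union> (if j \<in> cset n t c d i then {j} else {})"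
    by (auto simp: less_Suc_eq)
  moreover have "finite {j' \<in> cset n t c d i. j' < j}" by simp
  ultimately show ?thesis unfolding cnt_def by (auto simp: card_insert_if)
qed

lemmas xsimps = ex_simps neqs

lemma inner_step:
  assumes P: "P2 i m" and i: "i < n" and j: "j < n" and m7: "m 7 = c i + d i" and m8: "m 8 = real (t i)"
    and m9: "m 9 = real (B + j)" and m10: "m 10 = real (cnt i j)"
  shows "\<exists>s m'. reach prog (39, m) s (39, m') \<and> s \<le> 14 \<and> (\<forall>a. a \<notin> {9,10,11,12} \<longrightarrow> m' a = m a) \<and>
     m' 9 = real (B + Suc j) \<and> m' 10 = real (cnt i (Suc j))"
proof -
  have rg: "m 0 = real n" "m 2 = 0" "m 3 = 1" "m 4 = real (B + i)" "m 5 = real (B + n)"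
     "m 6 = real (n + n)" "m 13 = real (R + i)" "m 14 = real (B + (n + n) + n)" "m 15 = real B"
    using P unfolding P2_def by auto
  have dd: "m (B + j) = c j" "m (B + j + n) = d j" "m (B + j + (n + n)) = real (t j)"
    using P j unfolding P2_def data_def by auto
  have nj: "\<not> n \<le> j" using j by simp
  consider (a) "t j < t i" | (b) "t i < t j" | (c) "t j = t i" "j < i" "c j + d j \<le> c i + d i"
    | (d) "t j = t i" "j < i" "\<not> c j + d j \<le> c i + d i"
    | (e) "t j = t i" "\<not> j < i" "c i + d i \<le> c j + d j"
    | (f) "t j = t i" "\<not> j < i" "\<not> c i + d i \<le> c j + d j"
    by linarith
  then show ?thesis
  proof cases
    case a
    then have h: "t j \<le> t i" "\<not> t i \<le> t j" by auto
    show ?thesis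
      apply (rule exI[of _ "Suc (Suc (Suc (Suc (Suc (Suc (Suc (Suc 0)))))))"], rule exI, rule conjI)
       apply (simp add: xsimps rg dd nj m7 m8 m9 m10 h del: of_nat_add of_nat_Suc)
       apply (rule reach_0)
      using a by (simp add: cnt_Suc cset_def m9 m10)
  next
    case b
    then have h: "\<not> t j \<le> t i" by auto
    show ?thesis
      apply (rule exI[of _ "Suc (Suc (Suc (Suc (Suc (Suc (Suc 0))))))"], rule exI, rule conjI)
       apply (simp add: xsimps rg dd nj m7 m8 m9 m10 h del: of_nat_add of_nat_Suc)
       apply (rule reach_0)
      using b by (simp add: cnt_Suc cset_def m9 m10)
  next
    case c
    then have h: "\<not> i \<le> j" by auto
    show ?thesis
      apply (rule exI[of _ "Suc (Suc (Suc (Suc (Suc (Suc (Suc (Suc (Suc (Suc (Suc (Suc (Suc (Suc (0))))))))))))))"], rule exI, rule conjI)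
       apply (simp add: xsimps rg dd nj m7 m8 m9 m10 h c del: of_nat_add of_nat_Suc)
       apply (rule reach_0)
      using c h j by (simp add: cnt_Suc cset_def m9 m10)
  next
    case d
    then have h: "\<not> i \<le> j" by auto
    show ?thesis
      apply (rule exI[of _ "Suc (Suc (Suc (Suc (Suc (Suc (Suc (Suc (Suc (Suc (Suc (Suc (Suc (Suc (0))))))))))))))"], rule exI, rule conjI)
       apply (simp add: xsimps rg dd nj m7 m8 m9 m10 h d del: of_nat_add of_nat_Suc)
       apply (rule reach_0)
      using d h j by (simp add: cnt_Suc cset_def m9 m10)
  next
    case e
    then have h: "i \<le> j" by auto
    show ?thesis
      apply (rule exI[of _ "Suc (Suc (Suc (Suc (Suc (Suc (Suc (Suc (Suc (Suc (Suc (Suc (Suc (0)))))))))))))"], rule exI, rule conjI)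
       apply (simp add: xsimps rg dd nj m7 m8 m9 m10 h e del: of_nat_add of_nat_Suc)
       apply (rule reach_0)
      using e h j by (simp add: cnt_Suc cset_def m9 m10)
  next
    case f
    then have h: "i \<le> j" by auto
    show ?thesis
      apply (rule exI[of _ "Suc (Suc (Suc (Suc (Suc (Suc (Suc (Suc (Suc (Suc (Suc (Suc (Suc (Suc (0))))))))))))))"], rule exI, rule conjI)
       apply (simp add: xsimps rg dd nj m7 m8 m9 m10 h f del: of_nat_add of_nat_Suc)
       apply (rule reach_0)
      using f h j by (simp add: cnt_Suc cset_def m9 m10)
  qed
qed


lemma P2_frame:
  assumes "P2 i m" "\<And>a. a \<notin> {1,7,8,9,10,11,12} \<Longrightarrow> m' a = m a"
  shows "P2 i m'"
proof -
  have r: "m' r = m r" if "r \<in> {0,2,3,4,5,6,13,14,15}" for r using assms(2) that by auto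
  have b: "m' a = m a" if "16 \<le> a" for a using assms(2) that by auto
  show ?thesis using assms(1) B_ge R_ge unfolding P2_def data_def outs_def
    by (simp add: r b)
qed

lemma inner_loop:
  assumes "P2 i m" "i < n" "m 7 = c i + d i" "m 8 = real (t i)" "m 9 = real (B + j)"
    "m 10 = real (cnt i j)" "j \<le> n"
  shows "\<exists>s m'. reach prog (39, m) s (57, m') \<and> s \<le> 14 * (n - j) + 1 \<and> P2 i m' \<and>
    m' 7 = c i + d i \<and> m' 8 = real (t i) \<and> m' 10 = real (cnt i n)"
  using assms
proof (induction "n - j" arbitrary: j m)
  case 0
  then have jn: "j = n" by simp
  have rg: "m 5 = real (B + n)" using 0 unfolding P2_def by simp
  show ?case
    apply (rule exI[of _ "Suc 0"], rule exI, rule conjI)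
     apply (simp add: xsimps rg 0(6) jn del: of_nat_add of_nat_Suc)
     apply (rule reach_0)
    using 0(2-5,7) jn by simp
next
  case (Suc k)
  then have j: "j < n" by simp
  obtain s1 m1 where s1: "reach prog (39, m) s1 (39, m1)" "s1 \<le> 14"
    and fr: "\<forall>a. a \<notin> {9,10,11,12} \<longrightarrow> m1 a = m a" and m19: "m1 9 = real (B + Suc j)"
    and m110: "m1 10 = real (cnt i (Suc j))"
    using inner_step[OF Suc.prems(1,2) j Suc.prems(3-6)] by blast
  have P1: "P2 i m1" by (rule P2_frame[OF Suc.prems(1)]) (simp add: fr)
  have k: "k = n - Suc j" using Suc.hyps(2) by simp
  have m17: "m1 7 = c i + d i" using fr Suc.prems(3) by simp
  have m18: "m1 8 = real (t i)" using fr Suc.prems(4) by simp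
  have jn: "Suc j \<le> n" using j by simp
  obtain s2 m2 where s2: "reach prog (39, m1) s2 (57, m2)" "s2 \<le> 14 * (n - Suc j) + 1"
    and rest: "P2 i m2" "m2 7 = c i + d i" "m2 8 = real (t i)" "m2 10 = real (cnt i n)"
    using Suc.hyps(1)[OF k P1 Suc.prems(2) m17 m18 m19 m110 jn] by blast
  have "reach prog (39, m) (s1 + s2) (57, m2)" by (rule reach_trans[OF s1(1) s2(1)])
  moreover have "s1 + s2 \<le> 14 * (n - j) + 1" using s1(2) s2(2) j by (simp add: Suc_diff_Suc)
  ultimately show ?case using rest by blast
qed

lemma cnt_0: "cnt i 0 = 0" by (simp add: cnt_def)

lemma cnt_n: "cnt i n = rk n t c d i"
proof -
  have "{j' \<in> cset n t c d i. j' < n} = cset n t c d i" by (auto simp: cset_def)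
  then show ?thesis by (simp add: cnt_def rk_def)
qed

lemma seg_pre:
  assumes P: "P2 i m" and i: "i < n"
  shows "\<exists>m'. reach prog (30, m) (Suc (Suc (Suc (Suc (Suc (Suc (Suc (Suc (Suc (0)))))))))) (39, m') \<and> P2 i m' \<and> m' 7 = c i + d i \<and>
     m' 8 = real (t i) \<and> m' 9 = real (B + 0) \<and> m' 10 = real (cnt i 0)"
proof -
  have rg: "m 0 = real n" "m 2 = 0" "m 3 = 1" "m 4 = real (B + i)" "m 5 = real (B + n)"
     "m 6 = real (n + n)" "m 13 = real (R + i)" "m 14 = real (B + (n + n) + n)" "m 15 = real B"
    using P unfolding P2_def by auto
  have dd: "m (B + i) = c i" "m (B + i + n) = d i" "m (B + i + (n + n)) = real (t i)"
    using P i unfolding P2_def data_def by auto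
  have ni: "\<not> n \<le> i" using i by simp
  show ?thesis
    apply (rule exI, rule conjI)
     apply (simp add: xsimps rg dd ni del: of_nat_add of_nat_Suc)
     apply (rule reach_0)
    apply (intro conjI)
        apply (rule P2_frame[OF P])
        apply (simp add: cnt_0)+
    done
qed

lemma xs_val: "xs n t p c d i = (if i < n \<and> rk n t c d i < p (t i) then 1 else 0)"
  by (simp add: xs_def)

lemma seg_post:
  assumes P: "P2 i m" and i: "i < n" and m8: "m 8 = real (t i)" and m10: "m 10 = real (cnt i n)"
  shows "\<exists>s m'. reach prog (57, m) s (30, m') \<and> s \<le> 8 \<and>
    (\<forall>a. a \<notin> {4, 11, 13, R + i} \<longrightarrow> m' a = m a) \<and> m' (R + i) = real (xs n t p c d i) \<and>
    m' 4 = real (B + Suc i) \<and> m' 13 = real (R + Suc i)"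
proof -
  have rg: "m 0 = real n" "m 2 = 0" "m 3 = 1" "m 4 = real (B + i)" "m 5 = real (B + n)"
     "m 6 = real (n + n)" "m 13 = real (R + i)" "m 14 = real (B + (n + n) + n)" "m 15 = real B"
    using P unfolding P2_def by auto
  have tl: "t i < L" using valid i unfolding valid_instance_def by blast
  have dp: "m (t i + (B + (n + n) + n)) = real (p (t i))"
    using P tl unfolding P2_def data_def by auto
  show ?thesis
  proof (cases "p (t i) \<le> cnt i n")
    case True
    have x0: "xs n t p c d i = 0" using True by (simp add: xs_val cnt_n)
    show ?thesis
      apply (rule exI[of _ "Suc (Suc (Suc (Suc (Suc (Suc (Suc (0)))))))"], rule exI, rule conjI)
       apply (simp add: xsimps rg dp m8 m10 True del: of_nat_add of_nat_Suc)
       apply (rule reach_0)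
      by (simp add: x0 rg neqs)
  next
    case False
    have x1: "xs n t p c d i = 1" using False i by (simp add: xs_val cnt_n)
    show ?thesis
      apply (rule exI[of _ "Suc (Suc (Suc (Suc (Suc (Suc (Suc (Suc (0))))))))"], rule exI, rule conjI)
       apply (simp add: xsimps rg dp m8 m10 False del: of_nat_add of_nat_Suc)
       apply (rule reach_0)
      by (simp add: x1 rg neqs)
  qed
qed


lemma addr_lt:
  "b < n \<Longrightarrow> B + b < R" "b < n \<Longrightarrow> B + b + n < R" "b < n \<Longrightarrow> B + b + (n + n) < R"
  "l < L \<Longrightarrow> l + (B + (n + n) + n) < R"
  by (simp_all add: B_def R_def E_def)

lemma P2_next:
  assumes P: "P2 i m" and i: "i < n" and fr: "\<forall>a. a \<notin> {4, 11, 13, R + i} \<longrightarrow> m' a = m a"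
    and o: "m' (R + i) = real (xs n t p c d i)" and m4: "m' 4 = real (B + Suc i)"
    and m13: "m' 13 = real (R + Suc i)"
  shows "P2 (Suc i) m'"
proof -
  have fa: "m' a = m a" if "16 \<le> a" "a < R" for a
    using that by (intro fr[rule_format]) auto
  have fr2: "m' r = m r" if "r \<in> {0,2,3,5,6,14,15}" for r
    using that R_ge by (intro fr[rule_format]) auto
  have dm: "data m" and om: "outs i m" using P unfolding P2_def by auto
  have "data m'"
    unfolding data_def
  proof (intro conjI allI impI)
    fix b assume b: "b < n"
    show "m' (B + b) = c b" using fa[of "B + b"] addr_lt(1)[OF b] B_ge dm b unfolding data_def by simp
    show "m' (B + b + n) = d b" using fa[of "B + b + n"] addr_lt(2)[OF b] B_ge dm b unfolding data_def by simp
    show "m' (B + b + (n + n)) = real (t b)"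
      using fa[of "B + b + (n + n)"] addr_lt(3)[OF b] B_ge dm b unfolding data_def by simp
  next
    fix l assume l: "l < L"
    show "m' (l + (B + (n + n) + n)) = real (p l)"
      using fa[of "l + (B + (n + n) + n)"] addr_lt(4)[OF l] B_ge dm l unfolding data_def by simp
  qed
  moreover have "outs (Suc i) m'"
    unfolding outs_def
  proof (intro allI impI)
    fix i' assume "i' < Suc i"
    then consider "i' = i" | "i' < i" by linarith
    then show "m' (R + i') = real (xs n t p c d i')"
    proof cases
      case 1 then show ?thesis using o by simp
    next
      case 2
      then have "m' (R + i') = m (R + i')" using R_ge by (intro fr[rule_format]) auto
      then show ?thesis using om 2 unfolding outs_def by simp
    qed
  qed
  ultimately show ?thesis using P m4 m13 fr2 unfolding P2_def by simp
qed

lemma outer_loop: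
  assumes "P2 i m" "i \<le> n"
  shows "\<exists>s m'. reach prog (30, m) s (66, m') \<and> s \<le> (n - i) * (14 * n + 18) + 1 \<and> P2 n m'"
  using assms
proof (induction "n - i" arbitrary: i m)
  case 0
  then have jn: "i = n" by simp
  have rg: "m 5 = real (B + n)" "m 4 = real (B + i)" using 0(2) unfolding P2_def by simp_all
  show ?case
    apply (rule exI[of _ "Suc 0"], rule exI, rule conjI)
     apply (simp add: xsimps rg jn del: of_nat_add of_nat_Suc)
     apply (rule reach_0)
    using 0(2) jn by simp
next
  case (Suc k)
  then have i: "i < n" by simp
  obtain m1 where r1: "reach prog (30, m) (Suc (Suc (Suc (Suc (Suc (Suc (Suc (Suc (Suc (0)))))))))) (39, m1)" and P1: "P2 i m1"
    and f1: "m1 7 = c i + d i" "m1 8 = real (t i)" "m1 9 = real (B + 0)" "m1 10 = real (cnt i 0)"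
    using seg_pre[OF Suc.prems(1) i] by blast
  obtain s2 m2 where r2: "reach prog (39, m1) s2 (57, m2)" and s2: "s2 \<le> 14 * (n - 0) + 1"
    and P2: "P2 i m2" and f2: "m2 8 = real (t i)" "m2 10 = real (cnt i n)"
    using inner_loop[OF P1 i f1] by auto
  obtain s3 m3 where r3: "reach prog (57, m2) s3 (30, m3)" and s3: "s3 \<le> 8"
    and f3: "\<forall>a. a \<notin> {4, 11, 13, R + i} \<longrightarrow> m3 a = m2 a" "m3 (R + i) = real (xs n t p c d i)"
       "m3 4 = real (B + Suc i)" "m3 13 = real (R + Suc i)"
    using seg_post[OF P2 i f2] by blast
  have P3: "P2 (Suc i) m3" by (rule P2_next[OF P2 i f3])
  have k: "k = n - Suc i" using Suc.hyps(2) by simp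
  obtain s4 m4 where r4: "reach prog (30, m3) s4 (66, m4)" and s4: "s4 \<le> (n - Suc i) * (14 * n + 18) + 1"
    and P4: "P2 n m4"
    using Suc.hyps(1)[OF k P3] i by auto
  have "reach prog (30, m) ((Suc (Suc (Suc (Suc (Suc (Suc (Suc (Suc (Suc (0)))))))))) + s2 + s3 + s4) (66, m4)"
    by (rule reach_trans[OF reach_trans[OF reach_trans[OF r1 r2] r3] r4])
  moreover have "(Suc (Suc (Suc (Suc (Suc (Suc (Suc (Suc (Suc (0)))))))))) + s2 + s3 + s4 \<le> (n - i) * (14 * n + 18) + 1"
  proof -
    have "n - i = Suc (n - Suc i)" using i by simp
    then have "(n - i) * (14 * n + 18) = (14 * n + 18) + (n - Suc i) * (14 * n + 18)" by simp
    then show ?thesis using s2 s3 s4 by simp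
  qed
  ultimately show ?case using P4 by blast
qed


definition m0 :: "nat \<Rightarrow> real" where "m0 = encode n L t p G G' c d"

lemma enc01: "m0 0 = real n" "m0 (Suc 0) = real L" "m0 1 = real L"
  by (simp_all add: m0_def encode_def)

lemma enc_c: "b < n \<Longrightarrow> m0 (4 + b) = c b"
  by (simp add: m0_def encode_def)
lemma enc_d: "b < n \<Longrightarrow> m0 (4 + (b + n)) = d b"
  by (simp add: m0_def encode_def)
lemma enc_t: "b < n \<Longrightarrow> m0 (4 + (b + (n + n))) = real (t b)"
  by (simp add: m0_def encode_def)
lemma enc_p: "l < L \<Longrightarrow> m0 (4 + (l + (n + n + n))) = real (p l)"
  by (simp add: m0_def encode_def)

definition P1 :: "nat \<Rightarrow> (nat \<Rightarrow> real) \<Rightarrow> bool" where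
  "P1 k m \<longleftrightarrow> m 0 = real n \<and> m 1 = real E \<and> m 2 = real (B + k) \<and> m 3 = 1 \<and> m 4 = real (4 + k) \<and>
     2 \<le> k \<and> (\<forall>b<k. m (B + b) = m0 (4 + b)) \<and> (\<forall>a. 6 \<le> a \<longrightarrow> a < B \<longrightarrow> m a = m0 a)"

lemma E_fold: "L + (n + n + n) + 4 = E" by (simp add: E_def)
lemma B_fold: "E + 16 = B" by (simp add: B_def)
lemma R_fold: "E + E + 12 = R" by (simp add: R_def)
lemma E_lt_B: "E < B" by (simp add: B_def)

lemma prog1: "prog ! Suc 0 = Add 2 2 0" by (simp add: prog_def)
lemma two_Suc: "reach P (Suc (Suc 0), m) s cf = reach P (2, m) s cf" by (simp add: numeral_2_eq_2)

lemma phase0: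
  "\<exists>m'. reach prog (0, m0) (Suc (Suc (Suc (Suc (Suc (Suc (Suc (Suc (Suc (Suc (Suc (Suc (Suc (0)))))))))))))) (13, m') \<and> P1 2 m'"
  apply (rule exI, rule conjI)
   apply (simp add: xsimps prog1 two_Suc enc01 E_fold B_fold del: of_nat_add of_nat_Suc)
   apply (rule reach_0)
  unfolding P1_def
  apply (intro conjI)
         apply (simp_all add: enc01 neqs)
  using B_ge by (auto simp: less_Suc_eq numeral_2_eq_2)

lemma p1_step:
  assumes P: "P1 k m" and k: "4 + k < E"
  shows "\<exists>m'. reach prog (13, m) (Suc (Suc (Suc (Suc (Suc (Suc (0))))))) (13, m') \<and> P1 (Suc k) m'"
proof -
  have rg: "m 0 = real n" "m 1 = real E" "m 2 = real (B + k)" "m 3 = 1" "m 4 = real (4 + k)" "2 \<le> k"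
    "m (Suc 0) = real E" "Suc 0 \<le> k"
    using P unfolding P1_def by auto
  have src: "m (4 + k) = m0 (4 + k)" using P k E_lt_B unfolding P1_def by auto
  have nk: "\<not> E \<le> 4 + k" using k by simp
  show ?thesis
    apply (rule exI, rule conjI)
     apply (simp add: xsimps rg src nk del: of_nat_add of_nat_Suc)
     apply (rule reach_0)
    unfolding P1_def
    apply (intro conjI)
           apply (simp_all add: rg neqs)
    subgoal
      apply (intro allI impI)
      subgoal for b
        using P rg unfolding P1_def by (cases "b = k") (auto simp: neqs src)
      done
    subgoal using P rg unfolding P1_def by auto
    done
qed

lemma p1_loop:
  assumes "P1 k m"
  shows "\<exists>s m' k'. reach prog (13, m) s (19, m') \<and> s \<le> 6 * (E - (4 + k)) + 1 \<and> P1 k' m' \<and> E \<le> 4 + k'"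
  using assms
proof (induction "E - (4 + k)" arbitrary: k m)
  case 0
  then have ek: "E \<le> 4 + k" by simp
  have rg: "m 1 = real E" "m 4 = real (4 + k)" "m (Suc 0) = real E" using 0(2) unfolding P1_def by simp_all
  show ?case
    apply (rule exI[of _ "Suc 0"], rule exI, rule exI[of _ k], rule conjI)
     apply (simp add: xsimps rg ek del: of_nat_add of_nat_Suc)
     apply (rule reach_0)
    using 0(2) ek by simp
next
  case (Suc x)
  then have k: "4 + k < E" by simp
  obtain m1 where r1: "reach prog (13, m) (Suc (Suc (Suc (Suc (Suc (Suc (0))))))) (13, m1)" and P: "P1 (Suc k) m1"
    using p1_step[OF Suc.prems k] by blast
  have x: "x = E - (4 + Suc k)" using Suc.hyps(2) by simp
  obtain s2 m2 k2 where r2: "reach prog (13, m1) s2 (19, m2)" and s2: "s2 \<le> 6 * (E - (4 + Suc k)) + 1"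
    and P2: "P1 k2 m2" "E \<le> 4 + k2"
    using Suc.hyps(1)[OF x P] by blast
  have "reach prog (13, m) ((Suc (Suc (Suc (Suc (Suc (Suc (0))))))) + s2) (19, m2)" by (rule reach_trans[OF r1 r2])
  moreover have "(Suc (Suc (Suc (Suc (Suc (Suc (0))))))) + s2 \<le> 6 * (E - (4 + k)) + 1" using s2 k by simp
  ultimately show ?case using P2 by blast
qed

lemma p2_setup:
  assumes P: "P1 k m" and ek: "E \<le> 4 + k"
  shows "\<exists>m'. reach prog (19, m) (Suc (Suc (Suc (Suc (Suc (Suc (Suc (Suc (Suc (Suc (Suc (0)))))))))))) (30, m') \<and> P2 0 m'"
proof -
  have rg: "m 0 = real n" "m 1 = real E" "m 2 = real (B + k)" "m 3 = 1" "m 4 = real (4 + k)"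
    "m (Suc 0) = real E"
    using P unfolding P1_def by auto
  have rel: "\<And>x. x < k \<Longrightarrow> m (B + x) = m0 (4 + x)" using P unfolding P1_def by auto
  have Ek: "E - 4 \<le> k" using ek by simp
  have dat: "data m"
    unfolding data_def
  proof (intro conjI allI impI)
    fix b assume b: "b < n"
    have lt: "b < k" "b + n < k" "b + (n + n) < k" using b Ek by (simp_all add: E_def)
    show "m (B + b) = c b" using rel[OF lt(1)] enc_c[OF b] by simp
    have "B + b + n = B + (b + n)" by simp
    then show "m (B + b + n) = d b" using rel[OF lt(2)] enc_d[OF b] by (simp add: add.assoc)
    have "B + b + (n + n) = B + (b + (n + n))" by simp
    then show "m (B + b + (n + n)) = real (t b)" using rel[OF lt(3)] enc_t[OF b] by (simp add: add.assoc)
  next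
    fix l assume l: "l < L"
    have lt: "l + (n + n + n) < k" using l Ek by (simp add: E_def)
    have eq: "l + (B + (n + n) + n) = B + (l + (n + n + n))" by simp
    have "m (B + (l + (n + n + n))) = m0 (4 + (l + (n + n + n)))" by (rule rel[OF lt])
    also have "\<dots> = real (p l)" by (rule enc_p[OF l])
    finally show "m (l + (B + (n + n) + n)) = real (p l)" unfolding eq .
  qed
  show ?thesis
    apply (rule exI, rule conjI)
     apply (simp add: xsimps rg B_fold R_fold del: of_nat_add of_nat_Suc)
     apply (rule reach_0)
    unfolding P2_def
    apply (intro conjI)
              apply (simp_all add: rg neqs outs_def)
    using dat unfolding data_def by (simp add: neqs)
qed

definition P3 :: "nat \<Rightarrow> (nat \<Rightarrow> real) \<Rightarrow> bool" where
  "P3 q m \<longleftrightarrow> m 0 = real (R + q) \<and> m 1 = real (q + 4) \<and> m 3 = 1 \<and> m 4 = 4 \<and> q < n \<and>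
     (\<forall>i\<le>q. m (R + i) = real (xs n t p c d i)) \<and> (\<forall>i. q < i \<longrightarrow> i < n \<longrightarrow> m (i + 4) = real (xs n t p c d i))"

lemma R_gt: "n + 4 < R" by (simp add: R_def E_def)

lemma p3_pre:
  assumes P: "P2 n m" and n: "n = Suc n'"
  shows "\<exists>m'. reach prog (66, m) (Suc (Suc (Suc (Suc (Suc (0)))))) (71, m') \<and> P3 n' m'"
proof -
  have rg: "m 0 = real n" "m 2 = 0" "m 3 = 1" "m 13 = real (R + n)"
    using P unfolding P2_def by auto
  have o: "\<forall>i<n. m (R + i) = real (xs n t p c d i)" using P unfolding P2_def outs_def by auto
  show ?thesis
    apply (rule exI, rule conjI)
     apply (simp add: xsimps rg n del: of_nat_add of_nat_Suc)
     apply (rule reach_0)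
    unfolding P3_def
    apply (intro conjI)
          apply (simp_all add: n)
    using o n R_gt rg by auto
qed

lemma p3_step:
  assumes P: "P3 (Suc q) m"
  shows "\<exists>m'. reach prog (71, m) (Suc (Suc (Suc (Suc (Suc (Suc (0))))))) (71, m') \<and> P3 q m'"
proof -
  have rg: "m 0 = real (R + Suc q)" "m 1 = real (Suc q + 4)" "m 3 = 1" "m 4 = 4" "Suc q < n"
    "m (Suc 0) = real (Suc q + 4)"
    using P unfolding P3_def by auto
  have v: "m (R + Suc q) = real (xs n t p c d (Suc q))" using P unfolding P3_def by auto
  show ?thesis
    apply (rule exI, rule conjI)
     apply (simp add: xsimps rg v del: of_nat_add of_nat_Suc)
     apply (rule reach_0)
    unfolding P3_def
    apply (intro conjI)
          apply (simp_all add: rg)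
    subgoal using rg by simp
    subgoal using P R_gt rg unfolding P3_def by auto
    subgoal using P rg v unfolding P3_def by (auto simp: less_Suc_eq)
    done
qed

lemma p3_loop:
  assumes "P3 q m"
  shows "\<exists>s m'. reach prog (71, m) s (80, m') \<and> s \<le> 6 * q + 4 \<and> (\<forall>i<n. m' (4 + i) = real (xs n t p c d i))"
  using assms
proof (induction q arbitrary: m)
  case 0
  have rg: "m 0 = real R" "m 1 = 4" "m 3 = 1" "m 4 = 4" "m (Suc 0) = 4"
    and v: "m R = real (xs n t p c d 0)"
    and o: "\<forall>i. 0 < i \<longrightarrow> i < n \<longrightarrow> m (i + 4) = real (xs n t p c d i)"
    using 0 unfolding P3_def by auto
  show ?case
    apply (rule exI[of _ "(Suc (Suc (Suc (Suc (0)))))"], rule exI, rule conjI)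
     apply (simp add: xsimps rg v del: of_nat_add of_nat_Suc)
     apply (rule reach_0)
    apply (intro conjI allI impI)
     apply simp
    subgoal for i
      using o[rule_format, of i] v by (cases i) (simp_all add: add.commute)
    done
next
  case (Suc q)
  obtain m1 where r1: "reach prog (71, m) (Suc (Suc (Suc (Suc (Suc (Suc (0))))))) (71, m1)" and P: "P3 q m1"
    using p3_step[OF Suc.prems] by blast
  obtain s2 m2 where r2: "reach prog (71, m1) s2 (80, m2)" and s2: "s2 \<le> 6 * q + 4"
    and o: "\<forall>i<n. m2 (4 + i) = real (xs n t p c d i)"
    using Suc.IH[OF P] by blast
  have "reach prog (71, m) ((Suc (Suc (Suc (Suc (Suc (Suc (0))))))) + s2) (80, m2)" by (rule reach_trans[OF r1 r2])
  moreover have "(Suc (Suc (Suc (Suc (Suc (Suc (0))))))) + s2 \<le> 6 * Suc q + 4" using s2 by simp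
  ultimately show ?case using o by blast
qed


lemma L_le: "L \<le> n"
proof -
  have "{..<L} \<subseteq> t ` {..<n}"
  proof
    fix l assume "l \<in> {..<L}"
    then have "part n t l \<noteq> {}" using valid unfolding valid_instance_def by auto
    then obtain i where "i < n" "t i = l" unfolding part_def by auto
    then show "l \<in> t ` {..<n}" by auto
  qed
  then have "card {..<L} \<le> card (t ` {..<n})" by (intro card_mono) auto
  also have "\<dots> \<le> card {..<n}" by (rule card_image_le) auto
  finally show ?thesis by simp
qed

lemma p3_zero:
  assumes P: "P2 n m" and n: "n = 0"
  shows "reach prog (66, m) (Suc 0) (80, m)"
proof -
  have rg: "m 0 = real n" "m 2 = 0" using P unfolding P2_def by auto
  show ?thesis by (simp add: xsimps rg n reach_0 del: of_nat_add of_nat_Suc)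
qed

lemma main_run:
  "\<exists>s mf. reach prog (0, m0) s (80, mf) \<and> s \<le> 60 * (n + 1)^2 \<and>
     (\<forall>i<n. mf (4 + i) = real (xs n t p c d i))"
proof -
  obtain m1 where r1: "reach prog (0, m0) 13 (13, m1)" and P1: "P1 2 m1"
    using phase0 by (auto simp: numeral_eq_Suc)
  obtain s2 m2 k2 where r2: "reach prog (13, m1) s2 (19, m2)" and s2: "s2 \<le> 6 * (E - (4 + 2)) + 1"
    and P2: "P1 k2 m2" "E \<le> 4 + k2"
    using p1_loop[OF P1] by blast
  obtain m3 where r3: "reach prog (19, m2) 11 (30, m3)" and P3: "P2 0 m3"
    using p2_setup[OF P2] by (auto simp: numeral_eq_Suc)
  obtain s4 m4 where r4: "reach prog (30, m3) s4 (66, m4)" and s4: "s4 \<le> (n - 0) * (14 * n + 18) + 1"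
    and P4: "P2 n m4"
    using outer_loop[OF P3] by auto
  have r14: "reach prog (0, m0) (13 + s2 + 11 + s4) (66, m4)"
    by (rule reach_trans[OF reach_trans[OF reach_trans[OF r1 r2] r3] r4])
  have E4: "E \<le> 4 * n + 4" using L_le by (simp add: E_def)
  obtain s5 mf where r5: "reach prog (66, m4) s5 (80, mf)" and s5: "s5 \<le> 6 * n + 9"
    and o: "\<forall>i<n. mf (4 + i) = real (xs n t p c d i)"
  proof (cases n)
    case 0
    then show ?thesis using that[OF p3_zero[OF P4 0]] by simp
  next
    case (Suc n')
    obtain m5 where r5: "reach prog (66, m4) 5 (71, m5)" and P5: "P3 n' m5"
      using p3_pre[OF P4 Suc] by (auto simp: numeral_eq_Suc)
    obtain s6 mf where r6: "reach prog (71, m5) s6 (80, mf)" and s6: "s6 \<le> 6 * n' + 4"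
      and o: "\<forall>i<n. mf (4 + i) = real (xs n t p c d i)"
      using p3_loop[OF P5] by blast
    show ?thesis using that[OF reach_trans[OF r5 r6] _ o] s6 Suc by simp
  qed
  have "reach prog (0, m0) (13 + s2 + 11 + s4 + s5) (80, mf)" by (rule reach_trans[OF r14 r5])
  moreover have "13 + s2 + 11 + s4 + s5 \<le> 60 * (n + 1)^2"
  proof -
    have "s2 \<le> 6 * E + 1" using s2 by simp
    then have a: "s2 \<le> 24 * n + 25" using E4 by linarith
    have b: "s4 \<le> 14 * (n * n) + 18 * n + 1" using s4 by (simp add: algebra_simps)
    have "(n + 1)^2 = n * n + 2 * n + 1" by (simp add: power2_eq_square algebra_simps)
    then show ?thesis using a b s5 by simp
  qed
  ultimately show ?thesis using o by blast
qed

end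

theorem theorem4:
  shows "\<exists>(P :: instr list) (k :: nat) (C :: nat).
    \<forall>n L t p G G' c d.
      valid_instance n L t p c d \<and> (all_equal n c \<or> all_equal n d) \<longrightarrow>
      (\<exists>pc m. run P (C * (n + 1) ^ k) (0, encode n L t p G G' c d) = Some (pc, m) \<and>
         halted P (pc, m) \<and>
         (\<forall>i<n. m (4 + i) \<in> {0, 1}) \<and>
         optimal n L t p G G' c d (\<lambda>i. if i < n then nat \<lfloor>m (4 + i)\<rfloor> else 0))"
proof (rule exI[of _ prog], rule exI[of _ 2], rule exI[of _ 60], intro allI impI)
  fix n L t p G G' c d
  assume H: "valid_instance n L t p c d \<and> (all_equal n c \<or> all_equal n d)"
  interpret inst n L t p G G' c d using H by unfold_locales blast
  obtain s mf where r: "reach prog (0, m0) s (80, mf)" and s: "s \<le> 60 * (n + 1)^2"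
    and o: "\<forall>i<n. mf (4 + i) = real (xs n t p c d i)"
    using main_run by blast
  have h: "halted prog (80, mf)" by (simp add: halted_def)
  have run: "run prog (60 * (n + 1) ^ 2) (0, encode n L t p G G' c d) = Some (80, mf)"
    using reach_final[OF r h s] by (simp add: m0_def)
  have vals: "\<forall>i<n. mf (4 + i) \<in> {0, 1}" using o by (simp add: xs_def)
  have fx: "(\<lambda>i. if i < n then nat \<lfloor>mf (4 + i)\<rfloor> else 0) = xs n t p c d"
  proof
    fix i show "(if i < n then nat \<lfloor>mf (4 + i)\<rfloor> else 0) = xs n t p c d i"
      using o by (simp add: xs_def)
  qed
  have "optimal n L t p G G' c d (xs n t p c d)" using xs_optimal H by blast
  then show "\<exists>pc m. run prog (60 * (n + 1) ^ 2) (0, encode n L t p G G' c d) = Some (pc, m) \<and>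
         halted prog (pc, m) \<and> (\<forall>i<n. m (4 + i) \<in> {0, 1}) \<and>
         optimal n L t p G G' c d (\<lambda>i. if i < n then nat \<lfloor>m (4 + i)\<rfloor> else 0)"
    using run h vals fx by auto
qed

end
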